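(* Let $u^1:S\times B\to\mathbb{R}$ and let $y:S\to\Delta(B)$ be a one-to-one map such that $U^1(\mu_0,y)\ge U^1(\mu,y)$ for every $\mu\in\mathcal{M}$. Then every neighborhood of $u^1$ in $\mathbb{R}^{S\times B}$ contains a function $\tilde u^1:S\times B\to\mathbb{R}$ such that $\tilde U^1(\mu_0,y)>\tilde U^1(\mu,y)$ for every $\mu\in\mathcal{M}$ with $\mu\neq\mu_0$, where $\tilde U^1$ is computed with $\tilde u^1$ in place of $u^1$.
   Context: $S$ and $B$ are finite sets; messages are identified with states. $m\in\Delta(S)$ has full support. $\mathcal{M}$ is the set of probability distributions on $S\times S$ both of whose marginals equal $m$; $\mu_0(s,s)=m(s)$, $\mu_0(s,t)=0$ for $s\ne t$. With $u^1$ extended linearly to mixed actions, $U^1(\mu,y)=\sum_{s,a\in S}\mu(s,a)u^1(s,y(\cdot\mid a))$. *)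

theory Defs
  imports "HOL-Analysis.Analysis"
begin

definition is_dist :: "('a::finite \<Rightarrow> real) \<Rightarrow> bool" where
  "is_dist p \<longleftrightarrow> (\<forall>x. 0 \<le> p x) \<and> (\<Sum>x\<in>UNIV. p x) = 1"

definition couplings :: "('a::finite \<Rightarrow> real) \<Rightarrow> ('a \<times> 'a \<Rightarrow> real) set" where
  "couplings m = {\<mu>. is_dist \<mu> \<and> (\<forall>s. (\<Sum>t\<in>UNIV. \<mu> (s,t)) = m s)
                           \<and> (\<forall>t. (\<Sum>s\<in>UNIV. \<mu> (s,t)) = m t)}"

definition mu0 :: "('a::finite \<Rightarrow> real) \<Rightarrow> ('a \<times> 'a \<Rightarrow> real)" where
  "mu0 m = (\<lambda>(s,t). if s = t then m s else 0)"

definition u_mixed :: "('a \<times> 'b::finite \<Rightarrow> real) \<Rightarrow> 'a \<Rightarrow> ('b \<Rightarrow> real) \<Rightarrow> real" where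
  "u_mixed u s \<sigma> = (\<Sum>b\<in>UNIV. \<sigma> b * u (s,b))"

definition U1 :: "('a::finite \<times> 'b::finite \<Rightarrow> real) \<Rightarrow> ('a \<times> 'a \<Rightarrow> real) \<Rightarrow> ('a \<Rightarrow> 'b \<Rightarrow> real) \<Rightarrow> real" where
  "U1 u \<mu> y = (\<Sum>s\<in>UNIV. \<Sum>a\<in>UNIV. \<mu> (s,a) * u_mixed u s (y a))"

end

theory Submission
  imports Defs
begin

lemma U1_lin: "U1 (\<lambda>x. u x + e * v x) \<mu> y = U1 u \<mu> y + e * U1 v \<mu> y"
  unfolding U1_def u_mixed_def
  by (simp add: algebra_simps sum.distrib sum_distrib_left)

lemma gap:
  fixes m :: "'s::finite \<Rightarrow> real" and y :: "'s \<Rightarrow> 'b::finite \<Rightarrow> real"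
  assumes mu: "\<mu> \<in> couplings m"
  defines "v \<equiv> (\<lambda>(s,b). y s b)"
  defines "d \<equiv> (\<lambda>s a. (\<Sum>b\<in>UNIV. (y s b - y a b)^2) / 2)"
  shows "U1 v \<mu> y = U1 v (mu0 m) y - (\<Sum>s\<in>UNIV. \<Sum>a\<in>UNIV. \<mu> (s,a) * d s a)"
proof -
  define n where "n = (\<lambda>s. \<Sum>b\<in>UNIV. (y s b)^2)"
  have row: "\<And>s. (\<Sum>t\<in>UNIV. \<mu> (s,t)) = m s" and col: "\<And>t. (\<Sum>s\<in>UNIV. \<mu> (s,t)) = m t"
    using mu by (auto simp: couplings_def)
  have pt: "\<And>s a. (\<Sum>b\<in>UNIV. y a b * y s b) = (n s + n a)/2 - d s a"
  proof -
    fix s a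
    have "d s a = (\<Sum>b\<in>UNIV. ((y s b)^2 + (y a b)^2)/2 - y a b * y s b)"
      unfolding d_def sum_divide_distrib
      by (rule sum.cong) (auto simp: power2_diff field_simps)
    also have "\<dots> = (n s + n a)/2 - (\<Sum>b\<in>UNIV. y a b * y s b)"
      by (simp add: n_def sum_subtractf sum.distrib sum_divide_distrib[symmetric])
    finally show "(\<Sum>b\<in>UNIV. y a b * y s b) = (n s + n a)/2 - d s a" by simp
  qed
  have U0: "U1 v (mu0 m) y = (\<Sum>s\<in>UNIV. m s * n s)"
  proof -
    have "\<And>s. (\<Sum>a\<in>UNIV. mu0 m (s,a) * u_mixed v s (y a)) = m s * n s"
    proof -
      fix s
      have "(\<Sum>a\<in>UNIV. mu0 m (s,a) * u_mixed v s (y a)) = (\<Sum>a\<in>UNIV. if a = s then m s * n s else 0)"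
        by (rule sum.cong) (auto simp: mu0_def u_mixed_def v_def n_def power2_eq_square)
      then show "(\<Sum>a\<in>UNIV. mu0 m (s,a) * u_mixed v s (y a)) = m s * n s" by simp
    qed
    then show ?thesis unfolding U1_def by simp
  qed
  have A: "(\<Sum>s\<in>UNIV. \<Sum>a\<in>UNIV. \<mu> (s,a) * n s) = (\<Sum>s\<in>UNIV. m s * n s)"
    by (simp add: sum_distrib_right[symmetric] row)
  have B: "(\<Sum>s\<in>UNIV. \<Sum>a\<in>UNIV. \<mu> (s,a) * n a) = (\<Sum>s\<in>UNIV. m s * n s)"
    by (subst sum.swap) (simp add: sum_distrib_right[symmetric] col)
  have "U1 v \<mu> y = (\<Sum>s\<in>UNIV. \<Sum>a\<in>UNIV. \<mu> (s,a) * ((n s + n a)/2 - d s a))"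
    unfolding U1_def u_mixed_def v_def using pt by simp
  also have "\<dots> = ((\<Sum>s\<in>UNIV. \<Sum>a\<in>UNIV. \<mu> (s,a) * n s) + (\<Sum>s\<in>UNIV. \<Sum>a\<in>UNIV. \<mu> (s,a) * n a))/2
      - (\<Sum>s\<in>UNIV. \<Sum>a\<in>UNIV. \<mu> (s,a) * d s a)"
    by (simp add: algebra_simps sum.distrib sum_subtractf sum_divide_distrib[symmetric] add_divide_distrib)
  also have "\<dots> = U1 v (mu0 m) y - (\<Sum>s\<in>UNIV. \<Sum>a\<in>UNIV. \<mu> (s,a) * d s a)"
    using A B U0 by simp
  finally show ?thesis .
qed


lemma gap_pos:
  fixes m :: "'s::finite \<Rightarrow> real" and y :: "'s \<Rightarrow> 'b::finite \<Rightarrow> real"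
  assumes mu: "\<mu> \<in> couplings m" and ne: "\<mu> \<noteq> mu0 m" and inj: "inj y"
  shows "(\<Sum>s\<in>UNIV. \<Sum>a\<in>UNIV. \<mu> (s,a) * ((\<Sum>b\<in>UNIV. (y s b - y a b)^2) / 2)) > 0"
    (is "(\<Sum>s\<in>UNIV. \<Sum>a\<in>UNIV. ?t s a) > 0")
proof (rule ccontr)
  assume "\<not> ?thesis"
  have nn0: "\<And>x. 0 \<le> \<mu> x" using mu by (auto simp: couplings_def is_dist_def)
  have row: "\<And>s. (\<Sum>t\<in>UNIV. \<mu> (s,t)) = m s"
    using mu by (auto simp: couplings_def)
  have nn: "\<And>s a. 0 \<le> ?t s a" using nn0 by (simp add: sum_nonneg)
  hence "(\<Sum>s\<in>UNIV. \<Sum>a\<in>UNIV. ?t s a) \<ge> 0" by (intro sum_nonneg nn)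
  with \<open>\<not> ?thesis\<close> have "(\<Sum>s\<in>UNIV. \<Sum>a\<in>UNIV. ?t s a) = 0" by simp
  moreover have "\<And>s. 0 \<le> (\<Sum>a\<in>UNIV. ?t s a)" by (rule sum_nonneg) (rule nn)
  ultimately have "\<forall>s\<in>UNIV. (\<Sum>a\<in>UNIV. ?t s a) = 0"
    using sum_nonneg_eq_0_iff[of UNIV "\<lambda>s. \<Sum>a\<in>UNIV. ?t s a"] by simp
  have z: "\<And>s a. ?t s a = 0"
  proof -
    fix s a
    have "(\<Sum>a\<in>UNIV. ?t s a) = 0" using \<open>\<forall>s\<in>UNIV. _\<close> by simp
    thus "?t s a = 0" using sum_nonneg_eq_0_iff[of UNIV "\<lambda>a. ?t s a"] nn by simp
  qed
  have off: "\<And>s a. s \<noteq> a \<Longrightarrow> \<mu> (s,a) = 0"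
  proof -
    fix s a :: 's assume "s \<noteq> a"
    hence "y s \<noteq> y a" using inj by (auto dest: injD)
    then obtain b where "y s b \<noteq> y a b" by auto
    hence "(\<Sum>b\<in>UNIV. (y s b - y a b)^2) > 0"
      by (intro sum_pos2[of UNIV b]) auto
    with z[of s a] show "\<mu> (s,a) = 0" by simp
  qed
  have "\<mu> = mu0 m"
  proof
    fix x :: "'s \<times> 's"
    obtain s a where x: "x = (s,a)" by (cases x)
    show "\<mu> x = mu0 m x"
    proof (cases "s = a")
      case True
      have "m s = (\<Sum>t\<in>UNIV. if t = s then \<mu> (s,s) else 0)"
        unfolding row[symmetric] by (rule sum.cong) (auto simp: off)
      then show ?thesis using True x by (simp add: mu0_def)
    qed (simp add: x off mu0_def)
  qed
  with ne show False by simp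
qed

theorem lemma13:
  fixes m :: "'s::finite \<Rightarrow> real"
    and u :: "'s \<times> 'b::finite \<Rightarrow> real"
    and y :: "'s \<Rightarrow> 'b \<Rightarrow> real"
  assumes m_dist: "is_dist m"
    and m_full: "\<forall>s. 0 < m s"
    and y_dist: "\<forall>a. is_dist (y a)"
    and y_inj: "inj y"
    and opt: "\<forall>\<mu>\<in>couplings m. U1 u (mu0 m) y \<ge> U1 u \<mu> y"
  shows "\<forall>N. open N \<and> u \<in> N \<longrightarrow>
           (\<exists>u'\<in>N. \<forall>\<mu>\<in>couplings m. \<mu> \<noteq> mu0 m \<longrightarrow> U1 u' (mu0 m) y > U1 u' \<mu> y)"
proof (intro allI impI)
  fix N :: "('s \<times> 'b \<Rightarrow> real) set"
  assume N: "open N \<and> u \<in> N"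
  define v where "v = (\<lambda>(s,b). y s b)"
  define f where "f = (\<lambda>e::real. \<lambda>x. u x + e * v x)"
  have "continuous_on UNIV f" unfolding f_def
    by (intro continuous_on_coordinatewise_then_product continuous_intros)
  hence "isCont f 0" by (simp add: continuous_on_eq_continuous_at)
  hence "(f \<longlongrightarrow> u) (at 0)" unfolding isCont_def f_def by simp
  hence "(f \<longlongrightarrow> u) (at_right 0)" by (rule filterlim_at_split[THEN iffD1, THEN conjunct2])
  hence "eventually (\<lambda>e. f e \<in> N) (at_right 0)"
    using N by (auto dest: topological_tendstoD)
  moreover have "eventually (\<lambda>e::real. e > 0) (at_right 0)"
    by (simp add: eventually_at_right_less)
  ultimately have "eventually (\<lambda>e. f e \<in> N \<and> e > 0) (at_right 0)"
    by (rule eventually_conj)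
  hence "at_right (0::real) = bot \<or> (\<exists>e. f e \<in> N \<and> e > 0)" by (rule eventually_happens)
  with trivial_limit_at_right_real obtain e where e: "f e \<in> N" "e > 0" by blast
  show "\<exists>u'\<in>N. \<forall>\<mu>\<in>couplings m. \<mu> \<noteq> mu0 m \<longrightarrow> U1 u' (mu0 m) y > U1 u' \<mu> y"
  proof (intro bexI[OF _ e(1)] ballI impI)
    fix \<mu> assume mu: "\<mu> \<in> couplings m" and ne: "\<mu> \<noteq> mu0 m"
    have g: "U1 v \<mu> y = U1 v (mu0 m) y - (\<Sum>s\<in>UNIV. \<Sum>a\<in>UNIV. \<mu> (s,a) * ((\<Sum>b\<in>UNIV. (y s b - y a b)^2) / 2))"
      unfolding v_def by (rule gap[OF mu])
    have p: "(\<Sum>s\<in>UNIV. \<Sum>a\<in>UNIV. \<mu> (s,a) * ((\<Sum>b\<in>UNIV. (y s b - y a b)^2) / 2)) > 0"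
      by (rule gap_pos[OF mu ne y_inj])
    have "U1 u (mu0 m) y \<ge> U1 u \<mu> y" using opt mu by blast
    moreover have "U1 v \<mu> y < U1 v (mu0 m) y" using g p by simp
    ultimately have "U1 u \<mu> y + e * U1 v \<mu> y < U1 u (mu0 m) y + e * U1 v (mu0 m) y"
      using e(2) mult_strict_left_mono[of "U1 v \<mu> y" "U1 v (mu0 m) y" e] by linarith
    then show "U1 (f e) (mu0 m) y > U1 (f e) \<mu> y"
      unfolding f_def U1_lin by simp
  qed
qed

end
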